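(* Let $\widehat{\mathcal T}_\bullet,\widehat{\mathcal T}_\star$ be admissible hierarchical meshes and let $\widehat{\mathcal T}_\circ$ be the hierarchical mesh with domains $\widehat\Omega^k_\circ=\widehat\Omega^k_\bullet\cup\widehat\Omega^k_\star$, $k\in\mathbb N_0$ (equivalently $\widehat{\mathcal T}_\circ=\{\widehat T\in\widehat{\mathcal T}_\bullet:\exists\widehat T'\in\widehat{\mathcal T}_\star,\widehat T\subseteq\widehat T'\}\cup\{\widehat T\in\widehat{\mathcal T}_\star:\exists\widehat T'\in\widehat{\mathcal T}_\bullet,\widehat T\subseteq\widehat T'\}$). Then $\widehat{\mathcal T}_\circ$ is admissible, finer than both $\widehat{\mathcal T}_\bullet$ and $\widehat{\mathcal T}_\star$, and $\#\widehat{\mathcal T}_\circ\le\#\widehat{\mathcal T}_\bullet+\#\widehat{\mathcal T}_\star-\#\widehat{\mathcal T}^0$.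
   Context: Parameter domain $\widehat\Omega=(0,1)^d$, $d\ge2$; degrees $p_1,\dots,p_d\ge1$. For each $i$, $\widehat{\mathcal K}^0_i$ is a $p_i$-open knot vector in $[0,1]$ (first $p_i+1$ knots $0$, last $p_i+1$ knots $1$, interior multiplicities $\le p_i$); $\widehat{\mathcal K}^{k+1}_i$ arises from $\widehat{\mathcal K}^k_i$ by inserting each nondegenerate span's midpoint once. $\widehat{\mathcal B}^k$: tensor-product B-splines of degree $(p_1,\dots,p_d)$ for $\widehat{\mathcal K}^k$; $\widehat{\mathcal T}^k$: closed cells of level $k$. A hierarchical mesh is given by closed sets $[0,1]^d=\widehat\Omega^0\supseteq\widehat\Omega^1\supseteq\cdots$, each $\widehat\Omega^k$ ($k\ge1$) a union of cells of $\widehat{\mathcal T}^{k-1}$, eventually empty; mesh $\widehat{\mathcal T}=\bigcup_k\{\widehat T\in\widehat{\mathcal T}^k:\widehat T\subseteq\widehat\Omega^k,\widehat T\not\subseteq\widehat\Omega^{k+1}\}$, ${\rm level}(\widehat T)=k$; hierarchical basis $\widehat{\mathcal H}=\bigcup_k\{\widehat\beta\in\widehat{\mathcal B}^k:{\rm supp}\,\widehat\beta\subseteq\widehat\Omega^k,{\rm supp}\,\widehat\beta\not\subseteq\widehat\Omega^{k+1}\}$. Neighbors $\mathcal N(\widehat T)=\{\widehat T'\in\widehat{\mathcal T}:\exists\widehat\beta\in\widehat{\mathcal H},\widehat T,\widehat T'\subseteq{\rm supp}\,\widehat\beta\}$; the mesh is admissible if $|{\rm level}(\widehat T)-{\rm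 level}(\widehat T')|\le1$ whenever $\widehat T'\in\mathcal N(\widehat T)$. A mesh is finer than another if each of its domains $\widehat\Omega^k$ contains the corresponding domain of the other. *)

theory Defs
  imports "HOL-Analysis.Analysis"
begin

text \<open>Parameter domain (0,1)^d is modelled on the Euclidean space real^'n, with d = CARD('n).
  Degrees are p :: 'n => nat, initial knot vectors K0 :: 'n => real list.\<close>

definition open_knot_vector :: "nat \<Rightarrow> real list \<Rightarrow> bool" where
  "open_knot_vector p K \<longleftrightarrow>
     sorted K \<and> length K \<ge> 2 * (p + 1) \<and>
     take (p + 1) K = replicate (p + 1) 0 \<and>
     drop (length K - (p + 1)) K = replicate (p + 1) 1 \<and>
     (\<forall>x \<in> set (drop (p + 1) (take (length K - (p + 1)) K)). count_list K x \<le> p)"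

definition refine_knots :: "real list \<Rightarrow> real list" where
  "refine_knots K = (let u = remdups K in
      sort (K @ map (\<lambda>(a, b). (a + b) / 2) (zip u (tl u))))"

definition knots :: "('n \<Rightarrow> real list) \<Rightarrow> nat \<Rightarrow> 'n \<Rightarrow> real list" where
  "knots K0 k i = (refine_knots ^^ k) (K0 i)"

definition brk :: "('n \<Rightarrow> real list) \<Rightarrow> nat \<Rightarrow> 'n \<Rightarrow> real list" where
  "brk K0 k i = remdups (knots K0 k i)"

definition cells :: "('n::finite \<Rightarrow> real list) \<Rightarrow> nat \<Rightarrow> (real^'n) set set" where
  "cells K0 k = {cbox (\<chi> i. brk K0 k i ! m i) (\<chi> i. brk K0 k i ! Suc (m i)) | m.
                  \<forall>i. Suc (m i) < length (brk K0 k i)}"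

text \<open>Tensor-product B-splines of level k are indexed by multi-indices j; the (closed)
  support of the B-spline with index j is the box spanned by the knots j_i .. j_i+p_i+1.\<close>
definition bidx :: "('n \<Rightarrow> nat) \<Rightarrow> ('n \<Rightarrow> real list) \<Rightarrow> nat \<Rightarrow> ('n \<Rightarrow> nat) set" where
  "bidx p K0 k = {j. \<forall>i. j i + p i + 1 < length (knots K0 k i)}"

definition bsupp :: "('n::finite \<Rightarrow> nat) \<Rightarrow> ('n \<Rightarrow> real list) \<Rightarrow> nat \<Rightarrow> ('n \<Rightarrow> nat) \<Rightarrow> (real^'n) set" where
  "bsupp p K0 k j = cbox (\<chi> i. knots K0 k i ! j i) (\<chi> i. knots K0 k i ! (j i + p i + 1))"

definition hier_domains :: "('n::finite \<Rightarrow> real list) \<Rightarrow> (nat \<Rightarrow> (real^'n) set) \<Rightarrow> bool" where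
  "hier_domains K0 \<Omega> \<longleftrightarrow>
     \<Omega> 0 = cbox 0 One \<and>
     (\<forall>k. \<Omega> (Suc k) \<subseteq> \<Omega> k) \<and>
     (\<forall>k. \<exists>S \<subseteq> cells K0 k. \<Omega> (Suc k) = \<Union>S) \<and>
     (\<exists>N. \<Omega> N = {})"

definition mesh :: "('n::finite \<Rightarrow> real list) \<Rightarrow> (nat \<Rightarrow> (real^'n) set) \<Rightarrow> (real^'n) set set" where
  "mesh K0 \<Omega> = {T. \<exists>k. T \<in> cells K0 k \<and> T \<subseteq> \<Omega> k \<and> \<not> T \<subseteq> \<Omega> (Suc k)}"

definition level :: "('n::finite \<Rightarrow> real list) \<Rightarrow> (real^'n) set \<Rightarrow> nat" where
  "level K0 T = (LEAST k. T \<in> cells K0 k)"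

text \<open>Hierarchical basis, as pairs (level, multi-index).\<close>
definition hbasis :: "('n::finite \<Rightarrow> nat) \<Rightarrow> ('n \<Rightarrow> real list) \<Rightarrow> (nat \<Rightarrow> (real^'n) set)
    \<Rightarrow> (nat \<times> ('n \<Rightarrow> nat)) set" where
  "hbasis p K0 \<Omega> = {(k, j). j \<in> bidx p K0 k \<and> bsupp p K0 k j \<subseteq> \<Omega> k \<and>
                            \<not> bsupp p K0 k j \<subseteq> \<Omega> (Suc k)}"

definition neighbors :: "('n::finite \<Rightarrow> nat) \<Rightarrow> ('n \<Rightarrow> real list) \<Rightarrow> (nat \<Rightarrow> (real^'n) set)
    \<Rightarrow> (real^'n) set \<Rightarrow> (real^'n) set set" where
  "neighbors p K0 \<Omega> T = {T' \<in> mesh K0 \<Omega>. \<exists>(k, j) \<in> hbasis p K0 \<Omega>.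
       T \<subseteq> bsupp p K0 k j \<and> T' \<subseteq> bsupp p K0 k j}"

definition admissible :: "('n::finite \<Rightarrow> nat) \<Rightarrow> ('n \<Rightarrow> real list) \<Rightarrow> (nat \<Rightarrow> (real^'n) set) \<Rightarrow> bool" where
  "admissible p K0 \<Omega> \<longleftrightarrow>
     (\<forall>T \<in> mesh K0 \<Omega>. \<forall>T' \<in> neighbors p K0 \<Omega> T.
        \<bar>int (level K0 T) - int (level K0 T')\<bar> \<le> 1)"

definition finer :: "(nat \<Rightarrow> (real^'n) set) \<Rightarrow> (nat \<Rightarrow> (real^'n) set) \<Rightarrow> bool" where
  "finer \<Omega>f \<Omega>c \<longleftrightarrow> (\<forall>k. \<Omega>c k \<subseteq> \<Omega>f k)"

end

theory Submission
  imports Defs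
begin


lemma refine_mset: "mset (refine_knots K) = mset K + mset (map (\<lambda>(a, b). (a + b) / 2) (zip (remdups K) (tl (remdups K))))"
  by (simp add: refine_knots_def Let_def)

lemma refine_set: "set (refine_knots K) = set K \<union> set (map (\<lambda>(a, b). (a + b) / 2) (zip (remdups K) (tl (remdups K))))"
  by (simp add: refine_knots_def Let_def)

lemma refine_sorted: "sorted (refine_knots K)"
  by (simp add: refine_knots_def Let_def)

lemma refine_mid:
  assumes "Suc r < length (remdups K)"
  shows "(remdups K ! r + remdups K ! Suc r) / 2 \<in> set (refine_knots K)"
proof -
  let ?u = "remdups K"
  have "(?u ! r, ?u ! Suc r) \<in> set (zip ?u (tl ?u))"
    using assms by (auto simp: in_set_zip nth_tl intro!: exI[of _ r])
  then show ?thesis unfolding refine_set by force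
qed

definition kinv :: "nat \<Rightarrow> real list \<Rightarrow> bool" where
  "kinv p K \<longleftrightarrow> sorted K \<and> set K \<subseteq> {0..1} \<and> 0 \<in> set K \<and> p + 1 \<le> count_list K 1"

lemma kinv_refine:
  assumes "kinv p K" shows "kinv p (refine_knots K)"
proof -
  have s: "set (remdups K) \<subseteq> {0..1}" using assms by (auto simp: kinv_def)
  have "set (map (\<lambda>(a, b). (a + b) / 2) (zip (remdups K) (tl (remdups K)))) \<subseteq> {0..1}"
  proof
    fix x assume "x \<in> set (map (\<lambda>(a, b). (a + b) / 2) (zip (remdups K) (tl (remdups K))))"
    then obtain a b where ab: "(a,b) \<in> set (zip (remdups K) (tl (remdups K)))" "x = (a+b)/2" by auto
    then have "a \<in> set (remdups K)" "b \<in> set (remdups K)"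
      using set_zip_leftD set_zip_rightD list.set_sel(2)
      by (metis, metis list.sel(2) list.set_sel(2))
    then have "a \<in> {0..1}" "b \<in> {0..1}" using s by auto
    then show "x \<in> {0..1}" using ab(2) by auto
  qed
  moreover have "count_list K 1 \<le> count_list (refine_knots K) 1"
    by (metis count_mset refine_mset count_union le_add1)
  ultimately show ?thesis using assms refine_sorted unfolding kinv_def refine_set by auto
qed

lemma kinv_K0:
  assumes "open_knot_vector p K" shows "kinv p K"
proof -
  let ?n = "length K - (p+1)"
  have so: "sorted K" and len: "length K \<ge> 2*(p+1)" and tk: "take (p+1) K = replicate (p+1) 0"
    and dr: "drop ?n K = replicate (p+1) 1"
    using assms by (auto simp: open_knot_vector_def)
  have "K!0 = 0" using tk by (metis Suc_eq_plus1 nth_replicate nth_take zero_less_Suc)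
  moreover have "0 < length K" by (rule less_le_trans[OF _ len]) simp
  ultimately have z: "0 \<in> set K" by (metis nth_mem)
  have c: "count_list K 1 \<ge> p + 1"
  proof -
    have "count_list K 1 = count_list (take ?n K) 1 + count_list (drop ?n K) 1"
      by (metis append_take_drop_id count_list_append)
    also have "count_list (drop ?n K) 1 = p + 1" using dr by (metis count_mset count_replicate_mset mset_replicate)
    finally show ?thesis by simp
  qed
  have up: "\<forall>x\<in>set K. x \<le> 1"
  proof
    fix x assume x: "x \<in> set K"
    have "sorted (take ?n K @ drop ?n K)" using so by (simp only: append_take_drop_id)
    hence "\<forall>a\<in>set (take ?n K). \<forall>b\<in>set (drop ?n K). a \<le> b" by (simp only: sorted_append) blast
    moreover have "1 \<in> set (drop ?n K)" using dr by simp
    moreover have "x \<in> set (take ?n K) \<or> x \<in> set (drop ?n K)" using x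
      by (metis Un_iff append_take_drop_id set_append)
    ultimately show "x \<le> 1" using dr by auto
  qed
  have lo: "\<forall>x\<in>set K. 0 \<le> x"
  proof
    fix x assume x: "x \<in> set K"
    have "sorted (take (p+1) K @ drop (p+1) K)" using so by (simp only: append_take_drop_id)
    hence "\<forall>a\<in>set (take (p+1) K). \<forall>b\<in>set (drop (p+1) K). a \<le> b" by (simp only: sorted_append) blast
    moreover have "0 \<in> set (take (p+1) K)" using tk by simp
    moreover have "x \<in> set (take (p+1) K) \<or> x \<in> set (drop (p+1) K)" using x
      by (metis Un_iff append_take_drop_id set_append)
    ultimately show "0 \<le> x" using tk by auto
  qed
  show ?thesis unfolding kinv_def using so z c up lo by auto
qed

lemma knots_Suc: "knots K0 (Suc k) i = refine_knots (knots K0 k i)"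
  by (simp add: knots_def)

lemma knots_0: "knots K0 0 i = K0 i"
  by (simp add: knots_def)

lemma kinv_knots:
  assumes "\<forall>i. open_knot_vector (p i) (K0 i)" shows "kinv (p i) (knots K0 k i)"
  by (induction k) (auto simp: knots_0 knots_Suc kinv_K0 assms kinv_refine)

lemma knots_set_mono: "k \<le> l \<Longrightarrow> set (knots K0 k i) \<subseteq> set (knots K0 l i)"
  by (rule lift_Suc_mono_le[of "\<lambda>k. set (knots K0 k i)"]) (auto simp: knots_Suc refine_set)



lemma strip:
  fixes u :: "real list"
  assumes ss: "sorted_wrt (<) u" and a: "a \<in> set u" and b: "b \<in> set u" and ab: "a < b"
    and x: "a \<le> x" "x \<le> b"
  shows "\<exists>m. Suc m < length u \<and> a \<le> u!m \<and> u!m \<le> x \<and> x \<le> u!Suc m \<and> u!Suc m \<le> b"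
proof -
  obtain ia where ia: "ia < length u" "u!ia = a" using a by (metis in_set_conv_nth)
  obtain ib where ib: "ib < length u" "u!ib = b" using b by (metis in_set_conv_nth)
  have so: "sorted u" using ss strict_sorted_iff by blast
  have iab: "ia < ib"
  proof (rule ccontr)
    assume "\<not> ia < ib" hence "ib \<le> ia" by simp
    hence "u!ib \<le> u!ia" using sorted_nth_mono[OF so \<open>ib \<le> ia\<close>] ia by simp
    thus False using ia ib ab by simp
  qed
  define m where "m = (GREATEST m. m < ib \<and> u!m \<le> x)"
  have ex: "ia < ib \<and> u!ia \<le> x" using iab ia x by simp
  have bnd: "\<forall>y. y < ib \<and> u!y \<le> x \<longrightarrow> y \<le> ib" by simp
  have m1: "m < ib \<and> u!m \<le> x" unfolding m_def by (rule GreatestI_nat[of _ ia ib]) (use ex in auto)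
  have m2: "ia \<le> m" unfolding m_def by (rule Greatest_le_nat[of _ ia ib]) (use ex in auto)
  have "u!ia \<le> u!m" using m1 m2 ib so by (simp add: sorted_nth_mono)
  moreover have "x \<le> u!Suc m \<and> u!Suc m \<le> b"
  proof (cases "Suc m = ib")
    case True thus ?thesis using ib x by simp
  next
    case False
    hence sl: "Suc m < ib" using m1 by simp
    have "\<not> (Suc m < ib \<and> u!Suc m \<le> x)"
    proof
      assume h: "Suc m < ib \<and> u!Suc m \<le> x"
      have "Suc m \<le> (GREATEST m. m < ib \<and> u!m \<le> x)" by (rule Greatest_le_nat[of _ "Suc m" ib]) (use h in auto)
      thus False unfolding m_def[symmetric] by simp
    qed
    hence "x < u!Suc m" using sl by simp
    moreover have "u!Suc m \<le> u!ib" using sorted_nth_mono[OF so less_imp_le[OF sl]] ib by simp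
    ultimately show ?thesis using ib by simp
  qed
  ultimately show ?thesis using m1 ib ia by (intro exI[of _ m]) auto
qed

lemma contain1:
  fixes u v :: "real list"
  assumes su: "sorted_wrt (<) u" and sv: "sorted_wrt (<) v" and sub: "set u \<subseteq> set v"
    and s: "Suc s < length v" "v!s < x" "x < v!Suc s"
    and r: "Suc r < length u" "u!r \<le> x" "x \<le> u!Suc r"
  shows "u!r \<le> v!s \<and> v!Suc s \<le> u!Suc r"
proof -
  have sov: "sorted v" using sv strict_sorted_iff by blast
  have "u!r \<in> set v" using sub r by auto
  then obtain q where q: "q < length v" "v!q = u!r" by (metis in_set_conv_nth)
  have "q \<le> s"
  proof (rule ccontr)
    assume "\<not> q \<le> s" hence "Suc s \<le> q" by simp
    hence "v!Suc s \<le> v!q" using sorted_nth_mono[OF sov \<open>Suc s \<le> q\<close>] q by simp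
    thus False using q r s by simp
  qed
  hence 1: "u!r \<le> v!s" using q sov s sorted_nth_mono[OF sov \<open>q \<le> s\<close>] by simp
  have "u!Suc r \<in> set v" using sub r by auto
  then obtain q' where q': "q' < length v" "v!q' = u!Suc r" by (metis in_set_conv_nth)
  have "Suc s \<le> q'"
  proof (rule ccontr)
    assume "\<not> Suc s \<le> q'" hence "q' \<le> s" by simp
    hence "v!q' \<le> v!s" using s sov by (simp add: sorted_nth_mono)
    thus False using q' r s by simp
  qed
  hence "v!Suc s \<le> u!Suc r" using q' sorted_nth_mono[OF sov \<open>Suc s \<le> q'\<close>] by simp
  with 1 show ?thesis by simp
qed

lemma nobetween:
  fixes u :: "real list"
  assumes su: "sorted_wrt (<) u" and s: "Suc s < length u" "u!s < c" "c < u!Suc s"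
  shows "c \<notin> set u"
proof
  assume "c \<in> set u"
  then obtain q where q: "q < length u" "u!q = c" by (metis in_set_conv_nth)
  have so: "sorted u" using su strict_sorted_iff by blast
  show False
  proof (cases "q \<le> s")
    case True thus False using q s sorted_nth_mono[OF so True] by simp
  next
    case False hence "Suc s \<le> q" by simp
    thus False using q s sorted_nth_mono[OF so \<open>Suc s \<le> q\<close>] by simp
  qed
qed



lemma parent1:
  fixes s :: "real list"
  assumes inv: "kinv p s" and j: "j + p + 1 < length (refine_knots s)"
  shows "\<exists>j'. j' + p + 1 < length s \<and> s!j' \<le> refine_knots s ! j
            \<and> refine_knots s ! (j + p + 1) \<le> s!(j' + p + 1)"
proof -
  define t where "t = refine_knots s"
  define a where "a = t!j"
  define b where "b = t!(j+p+1)"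
  have sot: "sorted t" using refine_sorted t_def by simp
  have kt: "kinv p t" using kinv_refine[OF inv] t_def by simp
  have tset: "set t \<subseteq> {0..1}" using kt unfolding kinv_def by simp
  have sos: "sorted s" and sset: "set s \<subseteq> {0..1}" and z: "0 \<in> set s"
     and c1: "p + 1 \<le> count_list s 1" using inv unfolding kinv_def by simp_all
  have jt: "j + p + 1 < length t" using j t_def by simp
  have "a \<in> set t" "b \<in> set t" using jt a_def b_def by auto
  hence a01: "0 \<le> a" "a \<le> 1" and b1: "b \<le> 1" using tset by auto
  define P where "P = (\<lambda>x::real. a < x \<and> x < b)"
  have ft: "length (filter P t) \<le> p"
  proof -
    have "{i. i < length t \<and> P (t!i)} \<subseteq> {Suc j..j+p}"
    proof
      fix i assume i: "i \<in> {i. i < length t \<and> P (t!i)}"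
      have "\<not> i \<le> j"
      proof
        assume h: "i \<le> j" show False using sorted_nth_mono[OF sot h] jt a_def i P_def by simp
      qed
      moreover have "\<not> j+p+1 \<le> i"
      proof
        assume h: "j+p+1 \<le> i" show False using sorted_nth_mono[OF sot h] i b_def P_def by simp
      qed
      ultimately show "i \<in> {Suc j..j+p}" by simp
    qed
    hence "card {i. i < length t \<and> P (t!i)} \<le> card {Suc j..j+p}" by (intro card_mono) auto
    thus ?thesis by (simp add: length_filter_conv_card)
  qed
  have "mset s \<subseteq># mset t" using refine_mset t_def by simp
  hence "mset (filter P s) \<subseteq># mset (filter P t)" by (simp add: multiset_filter_mono)
  hence "size (mset (filter P s)) \<le> size (mset (filter P t))" by (rule size_mset_mono)
  hence fs: "length (filter P s) \<le> p" using ft unfolding size_mset by linarith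
  show ?thesis
  proof (cases "a < 1")
    case True
    obtain i0 where i0: "i0 < length s" "s!i0 = 0" using z by (metis in_set_conv_nth)
    define j' where "j' = (GREATEST i. i < length s \<and> s!i \<le> a)"
    have ex: "i0 < length s \<and> s!i0 \<le> a" using i0 a01 by simp
    have j'1: "j' < length s \<and> s!j' \<le> a" unfolding j'_def
      by (rule GreatestI_nat[of _ i0 "length s"]) (use ex in auto)
    have gt: "a < s!i" if "j' < i" "i < length s" for i
    proof (rule ccontr)
      assume "\<not> a < s!i"
      hence "i \<le> (GREATEST i. i < length s \<and> s!i \<le> a)" using that by (intro Greatest_le_nat[of _ i "length s"]) auto
      hence "i \<le> j'" unfolding j'_def .
      thus False using that by simp
    qed
    have len: "j' + p + 1 < length s"
    proof -
      have "{i. i < length s \<and> s!i = 1} \<subseteq> {Suc j'..<length s}"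
      proof
        fix i assume i: "i \<in> {i. i < length s \<and> s!i = 1}"
        have "\<not> i \<le> j'"
        proof
          assume h: "i \<le> j'" hence "s!i \<le> s!j'" using sorted_nth_mono[OF sos h] j'1 by simp
          thus False using i j'1 True by simp
        qed
        thus "i \<in> {Suc j'..<length s}" using i by simp
      qed
      hence "card {i. i < length s \<and> s!i = 1} \<le> card {Suc j'..<length s}" by (intro card_mono) auto
      moreover have "count_list s 1 = card {i. i < length s \<and> s!i = 1}"
        unfolding count_list_eq_length_filter length_filter_conv_card by (metis (mono_tags))
      ultimately show ?thesis using c1 by simp
    qed
    have "b \<le> s!(j'+p+1)"
    proof (rule ccontr)
      assume nb: "\<not> b \<le> s!(j'+p+1)"
      have "{Suc j'..j'+p+1} \<subseteq> {i. i < length s \<and> P (s!i)}"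
      proof
        fix i assume i: "i \<in> {Suc j'..j'+p+1}"
        hence "i \<le> j'+p+1" by simp
        hence "s!i \<le> s!(j'+p+1)" using sorted_nth_mono[OF sos _ len] by simp
        thus "i \<in> {i. i < length s \<and> P (s!i)}" using gt[of i] i len nb P_def by auto
      qed
      hence "card {Suc j'..j'+p+1} \<le> card {i. i < length s \<and> P (s!i)}" by (intro card_mono) auto
      hence "p + 1 \<le> length (filter P s)" by (simp add: length_filter_conv_card)
      thus False using fs by simp
    qed
    thus ?thesis using len j'1 a_def b_def t_def by (intro exI[of _ j']) auto
  next
    case False
    hence a1: "a = 1" using a01 by simp
    have "length (filter (\<lambda>x. x = 1) s) < length s"
      using z by (intro length_filter_less[of 0]) auto
    moreover have "count_list s 1 = length (filter (\<lambda>x. x = 1) s)"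
      unfolding count_list_eq_length_filter by (metis (mono_tags))
    ultimately have ls: "p + 2 \<le> length s" using c1 by simp
    define j' where "j' = length s - p - 2"
    have "count_list s 1 \<noteq> 0" using c1 by simp
    hence 1: "1 \<in> set s" by (simp add: count_list_0_iff)
    then obtain q where q: "q < length s" "s!q = 1" by (metis in_set_conv_nth)
    have "q \<le> j'+p+1" "j'+p+1 < length s" using q ls j'_def by auto
    hence "s!q \<le> s!(j'+p+1)" using sorted_nth_mono[OF sos] by blast
    moreover have "s!j' \<in> set s" using ls j'_def by simp
    hence "s!j' \<le> 1" using sset by auto
    ultimately show ?thesis using q a1 b1 ls j'_def a_def b_def t_def
      by (intro exI[of _ j']) auto
  qed
qed



definition good :: "('n \<Rightarrow> real list) \<Rightarrow> bool" where
  "good K0 \<longleftrightarrow> (\<forall>k i. sorted (knots K0 k i) \<and> set (knots K0 k i) \<subseteq> {0..1})"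

definition validx :: "('n::finite \<Rightarrow> real list) \<Rightarrow> nat \<Rightarrow> ('n \<Rightarrow> nat) \<Rightarrow> bool" where
  "validx K0 k m \<longleftrightarrow> (\<forall>i. Suc (m i) < length (brk K0 k i))"

definition cell :: "('n::finite \<Rightarrow> real list) \<Rightarrow> nat \<Rightarrow> ('n \<Rightarrow> nat) \<Rightarrow> (real^'n) set" where
  "cell K0 k m = cbox (\<chi> i. brk K0 k i ! m i) (\<chi> i. brk K0 k i ! Suc (m i))"

lemma cells_alt: "cells K0 k = {cell K0 k m | m. validx K0 k m}"
  by (simp add: cells_def cell_def validx_def)

lemma mem_cell: "x \<in> cell K0 k m \<longleftrightarrow> (\<forall>i. brk K0 k i ! m i \<le> x$i \<and> x$i \<le> brk K0 k i ! Suc (m i))"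
  by (simp add: cell_def mem_box_cart)

lemma good_K0: "\<forall>i. open_knot_vector (p i) (K0 i) \<Longrightarrow> good K0"
  using kinv_knots unfolding good_def kinv_def by (metis (no_types))

lemma brk_set: "set (brk K0 k i) = set (knots K0 k i)"
  by (simp add: brk_def)

lemma brk_ss: "good K0 \<Longrightarrow> sorted_wrt (<) (brk K0 k i)"
  unfolding good_def brk_def strict_sorted_iff by (simp add: sorted_remdups)

lemma brk_01: "good K0 \<Longrightarrow> x \<in> set (brk K0 k i) \<Longrightarrow> 0 \<le> x \<and> x \<le> 1"
  unfolding good_def brk_set by (metis atLeastAtMost_iff subsetD)

lemma lo_lt_hi: "good K0 \<Longrightarrow> validx K0 k m \<Longrightarrow> brk K0 k i ! m i < brk K0 k i ! Suc (m i)"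
  unfolding validx_def by (metis brk_ss sorted_wrt_nth_less lessI)

lemma brk_mid: "Suc r < length (brk K0 k i) \<Longrightarrow>
   (brk K0 k i ! r + brk K0 k i ! Suc r) / 2 \<in> set (knots K0 (Suc k) i)"
  unfolding brk_def knots_Suc by (rule refine_mid)

lemma brk_mono: "k \<le> l \<Longrightarrow> set (brk K0 k i) \<subseteq> set (brk K0 l i)"
  unfolding brk_set by (rule knots_set_mono)

definition ctr :: "('n::finite \<Rightarrow> real list) \<Rightarrow> nat \<Rightarrow> ('n \<Rightarrow> nat) \<Rightarrow> real^'n" where
  "ctr K0 k m = (\<chi> i. (brk K0 k i ! m i + brk K0 k i ! Suc (m i)) / 2)"

lemma ctr_strict: "good K0 \<Longrightarrow> validx K0 k m \<Longrightarrow>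
   brk K0 k i ! m i < ctr K0 k m $ i \<and> ctr K0 k m $ i < brk K0 k i ! Suc (m i)"
  using lo_lt_hi[of K0 k m i] by (simp add: ctr_def)

lemma ctr_in: "good K0 \<Longrightarrow> validx K0 k m \<Longrightarrow> ctr K0 k m \<in> cell K0 k m"
  using ctr_strict unfolding mem_cell by (meson less_imp_le)

lemma cell_sub_cell:
  assumes g: "good K0" and kl: "k \<le> l" and vm: "validx K0 l m" and vr: "validx K0 k r"
    and x: "\<forall>i. brk K0 l i ! m i < x$i \<and> x$i < brk K0 l i ! Suc (m i)"
    and xr: "x \<in> cell K0 k r"
  shows "cell K0 l m \<subseteq> cell K0 k r"
proof -
  have "\<forall>i. brk K0 k i ! r i \<le> brk K0 l i ! m i \<and> brk K0 l i ! Suc (m i) \<le> brk K0 k i ! Suc (r i)"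
  proof
    fix i
    show "brk K0 k i ! r i \<le> brk K0 l i ! m i \<and> brk K0 l i ! Suc (m i) \<le> brk K0 k i ! Suc (r i)"
      apply (rule contain1[OF brk_ss[OF g] brk_ss[OF g] brk_mono[OF kl]])
      using vm vr x xr unfolding validx_def mem_cell by auto
  qed
  then show ?thesis unfolding cell_def subset_iff mem_box_cart vec_lambda_beta by (meson order_trans)
qed

lemma cell_corners:
  assumes g: "good K0" and v: "validx K0 k m"
  shows "(\<chi> i. brk K0 k i ! m i) \<in> cell K0 k m" "(\<chi> i. brk K0 k i ! Suc (m i)) \<in> cell K0 k m"
  using lo_lt_hi[OF g v] unfolding mem_cell by (auto intro: less_imp_le)

lemma cell_eq_idx:
  assumes g: "good K0" and v1: "validx K0 k m" and v2: "validx K0 l r"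
    and eq: "cell K0 k m = cell K0 l r"
  shows "brk K0 k i ! m i = brk K0 l i ! r i \<and> brk K0 k i ! Suc (m i) = brk K0 l i ! Suc (r i)"
proof -
  have a: "(\<chi> i. brk K0 k i ! m i) \<in> cell K0 l r" "(\<chi> i. brk K0 k i ! Suc (m i)) \<in> cell K0 l r"
    using cell_corners[OF g v1] eq by auto
  have b: "(\<chi> i. brk K0 l i ! r i) \<in> cell K0 k m" "(\<chi> i. brk K0 l i ! Suc (r i)) \<in> cell K0 k m"
    using cell_corners[OF g v2] eq by auto
  show ?thesis using a b unfolding mem_cell by (auto intro: order_antisym)
qed

lemma level_unique_aux:
  assumes g: "good K0" and kl: "k < l" and v1: "validx K0 k m" and v2: "validx K0 l r"
  shows "cell K0 k m \<noteq> cell K0 l r"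
proof
  assume eq: "cell K0 k m = cell K0 l r"
  fix i
  let ?u = "brk K0 k i" and ?v = "brk K0 l i"
  have e: "?u ! m i = ?v ! r i" "?u ! Suc (m i) = ?v ! Suc (r i)"
    using cell_eq_idx[OF g v1 v2 eq] by auto
  define c where "c = (?u ! m i + ?u ! Suc (m i)) / 2"
  have "Suc (m i) < length (brk K0 k i)" using v1 unfolding validx_def by simp
  hence "c \<in> set (knots K0 (Suc k) i)" unfolding c_def by (rule brk_mid)
  hence cv: "c \<in> set ?v" using knots_set_mono[of "Suc k" l K0 i] kl unfolding brk_set by auto
  have lt: "?u ! m i < ?u ! Suc (m i)" using lo_lt_hi[OF g v1] .
  have "c \<notin> set ?v"
    apply (rule nobetween[OF brk_ss[OF g], of "r i"])
    using v2 lt e unfolding validx_def c_def by auto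
  thus False using cv by simp
qed

lemma level_unique:
  assumes g: "good K0" and "T \<in> cells K0 k" "T \<in> cells K0 l" shows "k = l"
proof -
  obtain m where m: "validx K0 k m" "T = cell K0 k m" using assms(2) unfolding cells_alt by auto
  obtain r where r: "validx K0 l r" "T = cell K0 l r" using assms(3) unfolding cells_alt by auto
  show ?thesis
  proof (rule ccontr)
    assume "k \<noteq> l"
    hence "k < l \<or> l < k" by arith
    thus False using level_unique_aux[OF g _ m(1) r(1)] level_unique_aux[OF g _ r(1) m(1)] m r by auto
  qed
qed

lemma level_eq: "good K0 \<Longrightarrow> T \<in> cells K0 k \<Longrightarrow> level K0 T = k"
  unfolding level_def by (rule Least_equality) (auto dest: level_unique)

lemma child:
  assumes g: "good K0" and v: "validx K0 k m"
  shows "\<exists>m'. validx K0 (Suc k) m' \<and> cell K0 (Suc k) m' \<subseteq> cell K0 k m"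
proof -
  have "\<forall>i. \<exists>s. Suc s < length (brk K0 (Suc k) i) \<and> brk K0 k i ! m i \<le> brk K0 (Suc k) i ! s
           \<and> brk K0 (Suc k) i ! Suc s \<le> brk K0 k i ! Suc (m i)"
  proof
    fix i
    let ?u = "brk K0 k i" and ?v = "brk K0 (Suc k) i"
    define c where "c = (?u ! m i + ?u ! Suc (m i)) / 2"
    have lt: "?u ! m i < ?u ! Suc (m i)" using lo_lt_hi[OF g v] .
    have "Suc (m i) < length (brk K0 k i)" using v unfolding validx_def by simp
    hence cv: "c \<in> set ?v" unfolding c_def brk_set by (rule brk_mid)
    have "m i < length ?u" using v unfolding validx_def by (meson Suc_lessD)
    hence av: "?u ! m i \<in> set ?v" using brk_mono[of k "Suc k" K0 i] by auto
    obtain s where s: "Suc s < length ?v" "?u ! m i \<le> ?v ! s" "?v ! s \<le> ?u ! m i"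
        "?u ! m i \<le> ?v ! Suc s" "?v ! Suc s \<le> c"
      using strip[OF brk_ss[OF g] av cv, of "?u ! m i"] lt c_def by auto
    show "\<exists>s. Suc s < length ?v \<and> ?u ! m i \<le> ?v ! s \<and> ?v ! Suc s \<le> ?u ! Suc (m i)"
      using s lt c_def by (intro exI[of _ s]) auto
  qed
  then obtain f where f: "\<forall>i. Suc (f i) < length (brk K0 (Suc k) i) \<and> brk K0 k i ! m i \<le> brk K0 (Suc k) i ! f i
           \<and> brk K0 (Suc k) i ! Suc (f i) \<le> brk K0 k i ! Suc (m i)" by (rule choice[THEN exE]) blast
  show ?thesis
    using f by (intro exI[of _ f]) (auto simp: validx_def mem_cell subset_iff, (meson order_trans)+)
qed

lemma cells_01: fixes K0 :: "'n::finite \<Rightarrow> real list" shows "good K0 \<Longrightarrow> T \<in> cells K0 k \<Longrightarrow> T \<subseteq> cbox 0 One"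
proof -
  assume g: "good K0" and T: "T \<in> cells K0 k"
  obtain m where m: "validx K0 k m" "T = cell K0 k m" using T unfolding cells_alt by auto
  have "\<forall>i. 0 \<le> brk K0 k i ! m i \<and> brk K0 k i ! Suc (m i) \<le> 1"
  proof
    fix i
    have "Suc (m i) < length (brk K0 k i)" using m(1) unfolding validx_def by simp
    hence "brk K0 k i ! m i \<in> set (brk K0 k i)" "brk K0 k i ! Suc (m i) \<in> set (brk K0 k i)" by auto
    thus "0 \<le> brk K0 k i ! m i \<and> brk K0 k i ! Suc (m i) \<le> 1" using brk_01[OF g] by blast
  qed
  note bd = this
  have one: "\<And>i. (One::real^'n) $ i = 1" by (metis Cart_1 one_index)
  show ?thesis
  proof
    fix x assume "x \<in> T"
    hence x: "\<forall>i. brk K0 k i ! m i \<le> x$i \<and> x$i \<le> brk K0 k i ! Suc (m i)" using m(2) mem_cell by blast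
    have "\<forall>i. 0 \<le> x$i \<and> x$i \<le> 1"
    proof
      fix i show "0 \<le> x$i \<and> x$i \<le> 1" using x[rule_format, of i] bd[rule_format, of i] by linarith
    qed
    thus "x \<in> cbox 0 One" unfolding mem_box_cart one by simp
  qed
qed

lemma cells_finite: "finite (cells K0 k)"
proof -
  have "{m. validx K0 k m} \<subseteq> Pi\<^sub>E UNIV (\<lambda>i. {..<length (brk K0 k i)})"
    unfolding validx_def PiE_def extensional_def by (auto intro: Suc_lessD)
  hence "finite {m. validx K0 k m}" by (rule finite_subset) (auto intro: finite_PiE)
  hence "finite (cell K0 k ` {m. validx K0 k m})" by simp
  moreover have "cells K0 k = cell K0 k ` {m. validx K0 k m}" unfolding cells_alt by auto
  ultimately show ?thesis by simp
qed

lemma cell_nonempty: "good K0 \<Longrightarrow> T \<in> cells K0 k \<Longrightarrow> T \<noteq> {}"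
  unfolding cells_alt using ctr_in by blast

lemma parent_unique:
  assumes g: "good K0" and E: "E \<in> cells K0 (Suc k)" and C1: "C1 \<in> cells K0 k" and C2: "C2 \<in> cells K0 k"
    and s1: "E \<subseteq> C1" and s2: "E \<subseteq> C2"
  shows "C1 = C2"
proof -
  obtain m where m: "validx K0 (Suc k) m" "E = cell K0 (Suc k) m" using E unfolding cells_alt by auto
  have sub: "C1 \<subseteq> C2" if C1: "C1 \<in> cells K0 k" and C2: "C2 \<in> cells K0 k" and s1: "E \<subseteq> C1" and s2: "E \<subseteq> C2" for C1 C2
  proof -
    obtain r1 where r1: "validx K0 k r1" "C1 = cell K0 k r1" using C1 unfolding cells_alt by auto
    obtain r2 where r2: "validx K0 k r2" "C2 = cell K0 k r2" using C2 unfolding cells_alt by auto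
    let ?x = "ctr K0 (Suc k) m"
    have xE: "?x \<in> E" using ctr_in[OF g m(1)] m(2) by simp
    have "\<forall>i. brk K0 k i ! r1 i < ?x$i \<and> ?x$i < brk K0 k i ! Suc (r1 i)"
    proof
      fix i
      have c1: "(\<chi> i. brk K0 (Suc k) i ! m i) \<in> C1" "(\<chi> i. brk K0 (Suc k) i ! Suc (m i)) \<in> C1"
        using cell_corners[OF g m(1)] m(2) s1 by auto
      hence "brk K0 k i ! r1 i \<le> brk K0 (Suc k) i ! m i" "brk K0 (Suc k) i ! Suc (m i) \<le> brk K0 k i ! Suc (r1 i)"
        unfolding r1(2) mem_cell by auto
      thus "brk K0 k i ! r1 i < ?x$i \<and> ?x$i < brk K0 k i ! Suc (r1 i)"
        using ctr_strict[OF g m(1), of i] by auto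
    qed
    moreover have "?x \<in> cell K0 k r2" using xE s2 r2 by auto
    ultimately show ?thesis using cell_sub_cell[OF g order_refl r1(1) r2(1)] r1 r2 by simp
  qed
  show ?thesis using sub[OF C1 C2 s1 s2] sub[OF C2 C1 s2 s1] by simp
qed



lemma hd_mono: "hier_domains K0 \<Omega> \<Longrightarrow> k \<le> l \<Longrightarrow> \<Omega> l \<subseteq> \<Omega> k"
  unfolding hier_domains_def by (rule lift_Suc_antimono_le[of \<Omega>]) auto

lemma hd0: "hier_domains K0 \<Omega> \<Longrightarrow> \<Omega> 0 = cbox 0 One"
  unfolding hier_domains_def by (elim conjE)
lemma hdS: "hier_domains K0 \<Omega> \<Longrightarrow> \<exists>S \<subseteq> cells K0 k. \<Omega> (Suc k) = \<Union>S"
  unfolding hier_domains_def by (elim conjE) (rule spec)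
lemma hdN: "hier_domains K0 \<Omega> \<Longrightarrow> \<exists>N. \<Omega> N = {}"
  unfolding hier_domains_def by (elim conjE)

lemma sub_dom:
  fixes K0 :: "'n::finite \<Rightarrow> real list"
  assumes g: "good K0" and h: "hier_domains K0 \<Omega>" and v: "validx K0 l m" and c: "ctr K0 l m \<in> \<Omega> l"
  shows "cell K0 l m \<subseteq> \<Omega> l"
proof (cases l)
  case 0
  have "cell K0 l m \<in> cells K0 l" using v unfolding cells_alt by auto
  hence "cell K0 l m \<subseteq> cbox 0 One" by (rule cells_01[OF g])
  moreover have "\<Omega> 0 = cbox 0 One" using h unfolding hier_domains_def by (elim conjE)
  ultimately show ?thesis using 0 by simp
next
  case (Suc l')
  have "\<exists>S \<subseteq> cells K0 l'. \<Omega> (Suc l') = \<Union>S" using h unfolding hier_domains_def by (elim conjE) (rule spec)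
  then obtain S where S: "S \<subseteq> cells K0 l'" "\<Omega> l = \<Union>S" using Suc by auto
  obtain E where E: "E \<in> S" "ctr K0 l m \<in> E" using c S by auto
  obtain r where r: "validx K0 l' r" "E = cell K0 l' r" using E S unfolding cells_alt by auto
  have "l' \<le> l" using Suc by simp
  have "cell K0 l m \<subseteq> cell K0 l' r"
    apply (rule cell_sub_cell[OF g \<open>l' \<le> l\<close> v r(1), of "ctr K0 l m"])
    using ctr_strict[OF g v] E r by auto
  thus ?thesis using E S r by auto
qed

lemma descent:
  fixes K0 :: "'n::finite \<Rightarrow> real list"
  assumes g: "good K0" and h: "hier_domains K0 \<Omega>" and D: "D \<in> cells K0 l" and DO: "D \<subseteq> \<Omega> l"
  shows "\<exists>T' l'. T' \<in> mesh K0 \<Omega> \<and> T' \<subseteq> D \<and> T' \<in> cells K0 l' \<and> l \<le> l'"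
proof -
  obtain N where N: "\<Omega> N = {}" using hdN[OF h] by blast
  have "\<forall>D l. D \<in> cells K0 l \<longrightarrow> D \<subseteq> \<Omega> l \<longrightarrow> N \<le> l + n \<longrightarrow>
          (\<exists>T' l'. T' \<in> mesh K0 \<Omega> \<and> T' \<subseteq> D \<and> T' \<in> cells K0 l' \<and> l \<le> l')" for n
  proof (induction n)
    case 0
    show ?case
    proof (intro allI impI)
      fix D l assume D: "D \<in> cells K0 l" "D \<subseteq> \<Omega> l" "N \<le> l + 0"
      have "\<Omega> l \<subseteq> \<Omega> N" using hd_mono[OF h] D(3) by simp
      thus "\<exists>T' l'. T' \<in> mesh K0 \<Omega> \<and> T' \<subseteq> D \<and> T' \<in> cells K0 l' \<and> l \<le> l'"
        using N D cell_nonempty[OF g D(1)] by auto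
    qed
  next
    case (Suc n)
    show ?case
    proof (intro allI impI)
      fix D l assume D: "D \<in> cells K0 l" "D \<subseteq> \<Omega> l" "N \<le> l + Suc n"
      show "\<exists>T' l'. T' \<in> mesh K0 \<Omega> \<and> T' \<subseteq> D \<and> T' \<in> cells K0 l' \<and> l \<le> l'"
      proof (cases "D \<subseteq> \<Omega> (Suc l)")
        case False
        hence "D \<in> mesh K0 \<Omega>" using D unfolding mesh_def by auto
        thus ?thesis using D by blast
      next
        case True
        obtain m where m: "validx K0 l m" "D = cell K0 l m" using D unfolding cells_alt by auto
        obtain m' where m': "validx K0 (Suc l) m'" "cell K0 (Suc l) m' \<subseteq> cell K0 l m"
          using child[OF g m(1)] by blast
        let ?E = "cell K0 (Suc l) m'"
        have E: "?E \<in> cells K0 (Suc l)" using m' unfolding cells_alt by auto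
        have "?E \<subseteq> \<Omega> (Suc l)" using True m m' by auto
        then obtain T' l' where "T' \<in> mesh K0 \<Omega> \<and> T' \<subseteq> ?E \<and> T' \<in> cells K0 l' \<and> Suc l \<le> l'"
          using Suc.IH[rule_format, OF E \<open>?E \<subseteq> \<Omega> (Suc l)\<close>] D(3) by auto
        thus ?thesis using m m' by (intro exI[of _ T'] exI[of _ l']) auto
      qed
    qed
  qed
  from this[of N, rule_format, OF D DO] show ?thesis by simp
qed

lemma knots_brk_mem: "n < length (knots K0 k i) \<Longrightarrow> knots K0 k i ! n \<in> set (brk K0 k i)"
  unfolding brk_set by simp

lemma point_cell:
  fixes K0 :: "'n::finite \<Rightarrow> real list"
  assumes g: "good K0" and j: "j \<in> bidx p K0 k" and x: "x \<in> bsupp p K0 k j"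
    and nd: "\<forall>i. knots K0 k i ! j i < knots K0 k i ! (j i + p i + 1)"
  shows "\<exists>T \<in> cells K0 k. x \<in> T \<and> T \<subseteq> bsupp p K0 k j"
proof -
  have "\<forall>i. \<exists>s. Suc s < length (brk K0 k i) \<and> knots K0 k i ! j i \<le> brk K0 k i ! s \<and>
       brk K0 k i ! s \<le> x$i \<and> x$i \<le> brk K0 k i ! Suc s \<and> brk K0 k i ! Suc s \<le> knots K0 k i ! (j i + p i + 1)"
  proof
    fix i
    have l: "j i + p i + 1 < length (knots K0 k i)" using j unfolding bidx_def by auto
    show "\<exists>s. Suc s < length (brk K0 k i) \<and> knots K0 k i ! j i \<le> brk K0 k i ! s \<and>
       brk K0 k i ! s \<le> x$i \<and> x$i \<le> brk K0 k i ! Suc s \<and> brk K0 k i ! Suc s \<le> knots K0 k i ! (j i + p i + 1)"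
      apply (rule strip[OF brk_ss[OF g] knots_brk_mem knots_brk_mem])
      using l x nd unfolding bsupp_def mem_box_cart by auto
  qed
  then obtain f where f: "\<forall>i. Suc (f i) < length (brk K0 k i) \<and> knots K0 k i ! j i \<le> brk K0 k i ! f i \<and>
       brk K0 k i ! f i \<le> x$i \<and> x$i \<le> brk K0 k i ! Suc (f i) \<and> brk K0 k i ! Suc (f i) \<le> knots K0 k i ! (j i + p i + 1)"
    by (rule choice[THEN exE]) blast
  have "cell K0 k f \<in> cells K0 k" using f unfolding cells_alt validx_def by auto
  moreover have "x \<in> cell K0 k f" using f unfolding mem_cell by auto
  moreover have "cell K0 k f \<subseteq> bsupp p K0 k j"
    using f unfolding cell_def bsupp_def subset_iff mem_box_cart vec_lambda_beta by (meson order_trans)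
  ultimately show ?thesis by blast
qed

lemma supp_01:
  fixes K0 :: "'n::finite \<Rightarrow> real list"
  assumes g: "good K0" and j: "j \<in> bidx p K0 k"
  shows "bsupp p K0 k j \<subseteq> cbox 0 One"
proof
  fix x assume x: "x \<in> bsupp p K0 k j"
  have one: "\<And>i. (One::real^'n) $ i = 1" by (metis Cart_1 one_index)
  have "\<forall>i. 0 \<le> x$i \<and> x$i \<le> 1"
  proof
    fix i
    have l: "j i + p i + 1 < length (knots K0 k i)" using j unfolding bidx_def by auto
    hence "knots K0 k i ! j i \<in> set (brk K0 k i)" "knots K0 k i ! (j i + p i + 1) \<in> set (brk K0 k i)"
      by (auto intro!: knots_brk_mem)
    hence "0 \<le> knots K0 k i ! j i" "knots K0 k i ! (j i + p i + 1) \<le> 1" using brk_01[OF g] by blast+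
    moreover have "knots K0 k i ! j i \<le> x$i" "x$i \<le> knots K0 k i ! (j i + p i + 1)"
      using x unfolding bsupp_def mem_box_cart by auto
    ultimately show "0 \<le> x$i \<and> x$i \<le> 1" by linarith
  qed
  thus "x \<in> cbox 0 One" unfolding mem_box_cart one by simp
qed

lemma supp_parent:
  fixes K0 :: "'n::finite \<Rightarrow> real list"
  assumes ok: "\<forall>i. open_knot_vector (p i) (K0 i)" and j: "j \<in> bidx p K0 (Suc k)"
  shows "\<exists>j' \<in> bidx p K0 k. bsupp p K0 (Suc k) j \<subseteq> bsupp p K0 k j'"
proof -
  have "\<forall>i. \<exists>j'. j' + p i + 1 < length (knots K0 k i) \<and> knots K0 k i ! j' \<le> knots K0 (Suc k) i ! j i
            \<and> knots K0 (Suc k) i ! (j i + p i + 1) \<le> knots K0 k i ! (j' + p i + 1)"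
  proof
    fix i
    show "\<exists>j'. j' + p i + 1 < length (knots K0 k i) \<and> knots K0 k i ! j' \<le> knots K0 (Suc k) i ! j i
            \<and> knots K0 (Suc k) i ! (j i + p i + 1) \<le> knots K0 k i ! (j' + p i + 1)"
      unfolding knots_Suc
      apply (rule parent1[OF kinv_knots[OF ok]])
      using j unfolding bidx_def knots_Suc by auto
  qed
  then obtain f where f: "\<forall>i. f i + p i + 1 < length (knots K0 k i) \<and> knots K0 k i ! f i \<le> knots K0 (Suc k) i ! j i
            \<and> knots K0 (Suc k) i ! (j i + p i + 1) \<le> knots K0 k i ! (f i + p i + 1)"
    by (rule choice[THEN exE]) blast
  have "f \<in> bidx p K0 k" using f unfolding bidx_def by auto
  moreover have "bsupp p K0 (Suc k) j \<subseteq> bsupp p K0 k f"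
    using f unfolding bsupp_def subset_iff mem_box_cart vec_lambda_beta by (meson order_trans)
  ultimately show ?thesis by blast
qed



definition Qp :: "('n::finite \<Rightarrow> nat) \<Rightarrow> ('n \<Rightarrow> real list) \<Rightarrow> (nat \<Rightarrow> (real^'n) set) \<Rightarrow> bool" where
  "Qp p K0 \<Omega> \<longleftrightarrow> (\<forall>k j D l. j \<in> bidx p K0 k \<longrightarrow> D \<in> cells K0 l \<longrightarrow> k + 2 \<le> l \<longrightarrow>
      D \<subseteq> bsupp p K0 k j \<longrightarrow> D \<subseteq> \<Omega> l \<longrightarrow> bsupp p K0 k j \<subseteq> \<Omega> (Suc k))"

lemma hdsuc: "hier_domains K0 \<Omega> \<Longrightarrow> \<Omega> (Suc k) \<subseteq> \<Omega> k"
  unfolding hier_domains_def by (elim conjE) (rule spec)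

lemma nondeg:
  fixes K0 :: "'n::finite \<Rightarrow> real list"
  assumes g: "good K0" and D: "D \<in> cells K0 l" and sub: "D \<subseteq> bsupp p K0 k j"
  shows "\<forall>i. knots K0 k i ! j i < knots K0 k i ! (j i + p i + 1)"
proof
  fix i
  obtain m where m: "validx K0 l m" "D = cell K0 l m" using D unfolding cells_alt by auto
  have c: "(\<chi> i. brk K0 l i ! m i) \<in> bsupp p K0 k j" "(\<chi> i. brk K0 l i ! Suc (m i)) \<in> bsupp p K0 k j"
    using cell_corners[OF g m(1)] m(2) sub by auto
  have "knots K0 k i ! j i \<le> brk K0 l i ! m i" "brk K0 l i ! Suc (m i) \<le> knots K0 k i ! (j i + p i + 1)"
    using c unfolding bsupp_def mem_box_cart by auto
  thus "knots K0 k i ! j i < knots K0 k i ! (j i + p i + 1)" using lo_lt_hi[OF g m(1), of i] by linarith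
qed

lemma adm_caseA:
  fixes K0 :: "'n::finite \<Rightarrow> real list"
  assumes g: "good K0" and h: "hier_domains K0 \<Omega>" and adm: "admissible p K0 \<Omega>"
    and j: "j \<in> bidx p K0 k" and D: "D \<in> cells K0 l" and kl: "k + 2 \<le> l"
    and Ds: "D \<subseteq> bsupp p K0 k j" and DO: "D \<subseteq> \<Omega> l"
    and sk: "bsupp p K0 k j \<subseteq> \<Omega> k"
  shows "bsupp p K0 k j \<subseteq> \<Omega> (Suc k)"
proof (rule ccontr)
  assume ns: "\<not> bsupp p K0 k j \<subseteq> \<Omega> (Suc k)"
  have hb: "(k, j) \<in> hbasis p K0 \<Omega>" using j sk ns unfolding hbasis_def by auto
  obtain T' l' where T': "T' \<in> mesh K0 \<Omega>" "T' \<subseteq> D" "T' \<in> cells K0 l'" "l \<le> l'"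
    using descent[OF g h D DO] by blast
  obtain x where x: "x \<in> bsupp p K0 k j" "x \<notin> \<Omega> (Suc k)" using ns by auto
  obtain T where T: "T \<in> cells K0 k" "x \<in> T" "T \<subseteq> bsupp p K0 k j"
    using point_cell[OF g j x(1) nondeg[OF g D Ds]] by blast
  have Tm: "T \<in> mesh K0 \<Omega>" unfolding mesh_def using T x sk by auto
  have "T' \<in> neighbors p K0 \<Omega> T" unfolding neighbors_def
    using T'(1) hb T(3) T'(2) Ds by (auto intro!: bexI[of _ "(k, j)"])
  hence "\<bar>int (level K0 T) - int (level K0 T')\<bar> \<le> 1" using adm Tm unfolding admissible_def by blast
  moreover have "level K0 T = k" "level K0 T' = l'" using level_eq[OF g] T T' by auto
  ultimately show False using kl T'(4) by linarith
qed

lemma adm_Q: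
  fixes K0 :: "'n::finite \<Rightarrow> real list"
  assumes ok: "\<forall>i. open_knot_vector (p i) (K0 i)" and h: "hier_domains K0 \<Omega>" and adm: "admissible p K0 \<Omega>"
  shows "Qp p K0 \<Omega>"
proof -
  have g: "good K0" using good_K0[OF ok] .
  have main: "j \<in> bidx p K0 k \<Longrightarrow> D \<in> cells K0 l \<Longrightarrow> k + 2 \<le> l \<Longrightarrow>
      D \<subseteq> bsupp p K0 k j \<Longrightarrow> D \<subseteq> \<Omega> l \<Longrightarrow> bsupp p K0 k j \<subseteq> \<Omega> (Suc k)" for k j D l
  proof (induction k arbitrary: j)
    case 0
    have "bsupp p K0 0 j \<subseteq> \<Omega> 0" using supp_01[OF g 0(1)] hd0[OF h] by simp
    thus ?case using adm_caseA[OF g h adm 0(1-5)] by simp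
  next
    case (Suc k)
    show ?case
    proof (cases "bsupp p K0 (Suc k) j \<subseteq> \<Omega> (Suc k)")
      case True
      thus ?thesis using adm_caseA[OF g h adm Suc.prems(1-5)] by simp
    next
      case False
      obtain j' where j': "j' \<in> bidx p K0 k" "bsupp p K0 (Suc k) j \<subseteq> bsupp p K0 k j'"
        using supp_parent[OF ok Suc.prems(1)] by blast
      have "bsupp p K0 k j' \<subseteq> \<Omega> (Suc k)"
        using Suc.IH[OF j'(1) Suc.prems(2)] Suc.prems(3,4,5) j'(2) by auto
      thus ?thesis using False j'(2) by auto
    qed
  qed
  show ?thesis unfolding Qp_def using main by blast
qed

lemma Q_adm:
  fixes K0 :: "'n::finite \<Rightarrow> real list"
  assumes g: "good K0" and h: "hier_domains K0 \<Omega>" and Q: "Qp p K0 \<Omega>"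
  shows "admissible p K0 \<Omega>"
  unfolding admissible_def
proof (intro ballI)
  fix T T' assume T: "T \<in> mesh K0 \<Omega>" and T': "T' \<in> neighbors p K0 \<Omega> T"
  obtain k j where kj: "(k, j) \<in> hbasis p K0 \<Omega>" "T \<subseteq> bsupp p K0 k j" "T' \<subseteq> bsupp p K0 k j"
    and T'm: "T' \<in> mesh K0 \<Omega>"
    using T' unfolding neighbors_def by auto
  have j: "j \<in> bidx p K0 k" "bsupp p K0 k j \<subseteq> \<Omega> k" "\<not> bsupp p K0 k j \<subseteq> \<Omega> (Suc k)"
    using kj(1) unfolding hbasis_def by auto
  have lv: "k \<le> level K0 S \<and> level K0 S \<le> Suc k" if S: "S \<in> mesh K0 \<Omega>" "S \<subseteq> bsupp p K0 k j" for S
  proof -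
    obtain lS where lS: "S \<in> cells K0 lS" "S \<subseteq> \<Omega> lS" "\<not> S \<subseteq> \<Omega> (Suc lS)"
      using S(1) unfolding mesh_def by auto
    have "k \<le> lS"
    proof (rule ccontr)
      assume "\<not> k \<le> lS" hence "Suc lS \<le> k" by simp
      hence "\<Omega> k \<subseteq> \<Omega> (Suc lS)" using hd_mono[OF h] by blast
      thus False using S(2) j(2) lS(3) by auto
    qed
    moreover have "lS \<le> Suc k"
    proof (rule ccontr)
      assume "\<not> lS \<le> Suc k" hence "k + 2 \<le> lS" by simp
      hence "bsupp p K0 k j \<subseteq> \<Omega> (Suc k)" using Q lS S j(1) unfolding Qp_def by blast
      thus False using j(3) by simp
    qed
    ultimately show ?thesis using level_eq[OF g lS(1)] by simp
  qed
  show "\<bar>int (level K0 T) - int (level K0 T')\<bar> \<le> 1"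
    using lv[OF T kj(2)] lv[OF T'm kj(3)] by linarith
qed

lemma cell_split:
  fixes K0 :: "'n::finite \<Rightarrow> real list"
  assumes g: "good K0" and hb: "hier_domains K0 \<Omega>b" and hs: "hier_domains K0 \<Omega>s"
    and D: "D \<in> cells K0 l" and DO: "D \<subseteq> \<Omega>b l \<union> \<Omega>s l"
  shows "D \<subseteq> \<Omega>b l \<or> D \<subseteq> \<Omega>s l"
proof -
  obtain m where m: "validx K0 l m" "D = cell K0 l m" using D unfolding cells_alt by auto
  have "ctr K0 l m \<in> \<Omega>b l \<union> \<Omega>s l" using ctr_in[OF g m(1)] m(2) DO by auto
  thus ?thesis using sub_dom[OF g hb m(1)] sub_dom[OF g hs m(1)] m(2) by auto
qed

lemma Q_union:
  fixes K0 :: "'n::finite \<Rightarrow> real list"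
  assumes g: "good K0" and hb: "hier_domains K0 \<Omega>b" and hs: "hier_domains K0 \<Omega>s"
    and Qb: "Qp p K0 \<Omega>b" and Qs: "Qp p K0 \<Omega>s"
  shows "Qp p K0 (\<lambda>k. \<Omega>b k \<union> \<Omega>s k)"
  unfolding Qp_def
proof (intro allI impI)
  fix k j D l
  assume a: "j \<in> bidx p K0 k" "D \<in> cells K0 l" "k + 2 \<le> l" "D \<subseteq> bsupp p K0 k j" "D \<subseteq> \<Omega>b l \<union> \<Omega>s l"
  from cell_split[OF g hb hs a(2) a(5)]
  show "bsupp p K0 k j \<subseteq> \<Omega>b (Suc k) \<union> \<Omega>s (Suc k)"
  proof
    assume "D \<subseteq> \<Omega>b l" thus ?thesis using Qb a unfolding Qp_def by blast
  next
    assume "D \<subseteq> \<Omega>s l" thus ?thesis using Qs a unfolding Qp_def by blast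
  qed
qed

lemma hier_union:
  assumes hb: "hier_domains K0 \<Omega>b" and hs: "hier_domains K0 \<Omega>s"
  shows "hier_domains K0 (\<lambda>k. \<Omega>b k \<union> \<Omega>s k)"
proof -
  have 0: "\<Omega>b 0 \<union> \<Omega>s 0 = cbox 0 One" using hd0[OF hb] hd0[OF hs] by simp
  have 1: "\<forall>k. \<Omega>b (Suc k) \<union> \<Omega>s (Suc k) \<subseteq> \<Omega>b k \<union> \<Omega>s k" using hdsuc[OF hb] hdsuc[OF hs] by blast
  have 2: "\<forall>k. \<exists>S \<subseteq> cells K0 k. \<Omega>b (Suc k) \<union> \<Omega>s (Suc k) = \<Union>S"
  proof
    fix k
    obtain S1 where S1: "S1 \<subseteq> cells K0 k" "\<Omega>b (Suc k) = \<Union>S1" using hdS[OF hb] by blast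
    obtain S2 where S2: "S2 \<subseteq> cells K0 k" "\<Omega>s (Suc k) = \<Union>S2" using hdS[OF hs] by blast
    show "\<exists>S \<subseteq> cells K0 k. \<Omega>b (Suc k) \<union> \<Omega>s (Suc k) = \<Union>S"
      using S1 S2 by (intro exI[of _ "S1 \<union> S2"]) auto
  qed
  obtain N1 where N1: "\<Omega>b N1 = {}" using hdN[OF hb] by blast
  obtain N2 where N2: "\<Omega>s N2 = {}" using hdN[OF hs] by blast
  have "\<Omega>b (max N1 N2) = {}" using hd_mono[OF hb, of N1 "max N1 N2"] N1 by simp
  moreover have "\<Omega>s (max N1 N2) = {}" using hd_mono[OF hs, of N2 "max N1 N2"] N2 by simp
  ultimately have 3: "\<exists>N. \<Omega>b N \<union> \<Omega>s N = {}" by blast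
  show ?thesis unfolding hier_domains_def using 0 1 2 3 by simp
qed



definition Acell :: "('n::finite \<Rightarrow> real list) \<Rightarrow> (nat \<Rightarrow> (real^'n) set) \<Rightarrow> nat \<Rightarrow> (real^'n) set set" where
  "Acell K0 \<Omega> k = {C \<in> cells K0 k. C \<subseteq> \<Omega> k}"
definition Bcell :: "('n::finite \<Rightarrow> real list) \<Rightarrow> (nat \<Rightarrow> (real^'n) set) \<Rightarrow> nat \<Rightarrow> (real^'n) set set" where
  "Bcell K0 \<Omega> k = {C \<in> cells K0 k. C \<subseteq> \<Omega> (Suc k)}"
definition nch :: "('n::finite \<Rightarrow> real list) \<Rightarrow> nat \<Rightarrow> (real^'n) set \<Rightarrow> nat" where
  "nch K0 k C = card {E \<in> cells K0 (Suc k). E \<subseteq> C}"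

lemma fin_sub: "finite {C \<in> cells K0 k. P C}"
  by (rule finite_subset[of _ "cells K0 k"]) (auto simp: cells_finite)
lemma Acell_fin: "finite (Acell K0 \<Omega> k)" unfolding Acell_def by (rule fin_sub)
lemma Bcell_fin: "finite (Bcell K0 \<Omega> k)" unfolding Bcell_def by (rule fin_sub)

lemma nch_pos:
  fixes K0 :: "'n::finite \<Rightarrow> real list"
  assumes g: "good K0" and C: "C \<in> cells K0 k" shows "1 \<le> nch K0 k C"
proof -
  obtain m where m: "validx K0 k m" "C = cell K0 k m" using C unfolding cells_alt by auto
  obtain m' where m': "validx K0 (Suc k) m'" "cell K0 (Suc k) m' \<subseteq> cell K0 k m" using child[OF g m(1)] by blast
  have "cell K0 (Suc k) m' \<in> {E \<in> cells K0 (Suc k). E \<subseteq> C}" using m m' unfolding cells_alt by auto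
  moreover have "finite {E \<in> cells K0 (Suc k). E \<subseteq> C}" by (rule fin_sub)
  ultimately have "card {E \<in> cells K0 (Suc k). E \<subseteq> C} \<noteq> 0" by auto
  thus ?thesis unfolding nch_def by simp
qed

lemma A_Suc:
  fixes K0 :: "'n::finite \<Rightarrow> real list"
  assumes g: "good K0" and h: "hier_domains K0 \<Omega>"
  shows "card (Acell K0 \<Omega> (Suc k)) = (\<Sum>C \<in> Bcell K0 \<Omega> k. nch K0 k C)"
proof -
  have eq: "Acell K0 \<Omega> (Suc k) = (\<Union>C \<in> Bcell K0 \<Omega> k. {E \<in> cells K0 (Suc k). E \<subseteq> C})"
  proof
    show "Acell K0 \<Omega> (Suc k) \<subseteq> (\<Union>C \<in> Bcell K0 \<Omega> k. {E \<in> cells K0 (Suc k). E \<subseteq> C})"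
    proof
      fix E assume E: "E \<in> Acell K0 \<Omega> (Suc k)"
      hence E1: "E \<in> cells K0 (Suc k)" "E \<subseteq> \<Omega> (Suc k)" unfolding Acell_def by auto
      obtain m where m: "validx K0 (Suc k) m" "E = cell K0 (Suc k) m" using E1(1) unfolding cells_alt by auto
      obtain S where S: "S \<subseteq> cells K0 k" "\<Omega> (Suc k) = \<Union>S" using hdS[OF h] by blast
      have "ctr K0 (Suc k) m \<in> \<Omega> (Suc k)" using ctr_in[OF g m(1)] m(2) E1(2) by auto
      then obtain C where C: "C \<in> S" "ctr K0 (Suc k) m \<in> C" using S by auto
      obtain r where r: "validx K0 k r" "C = cell K0 k r" using C S unfolding cells_alt by auto
      have "k \<le> Suc k" by simp
      have EC: "E \<subseteq> C"
        unfolding m(2) r(2)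
        apply (rule cell_sub_cell[OF g \<open>k \<le> Suc k\<close> m(1) r(1), of "ctr K0 (Suc k) m"])
        using ctr_strict[OF g m(1)] C r by auto
      have "C \<in> Bcell K0 \<Omega> k" unfolding Bcell_def using C S by auto
      thus "E \<in> (\<Union>C \<in> Bcell K0 \<Omega> k. {E \<in> cells K0 (Suc k). E \<subseteq> C})" using EC E1 by auto
    qed
  next
    show "(\<Union>C \<in> Bcell K0 \<Omega> k. {E \<in> cells K0 (Suc k). E \<subseteq> C}) \<subseteq> Acell K0 \<Omega> (Suc k)"
      unfolding Acell_def Bcell_def by auto
  qed
  have "card (\<Union>C \<in> Bcell K0 \<Omega> k. {E \<in> cells K0 (Suc k). E \<subseteq> C}) = (\<Sum>C \<in> Bcell K0 \<Omega> k. card {E \<in> cells K0 (Suc k). E \<subseteq> C})"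
  proof (rule card_UN_disjoint)
    show "finite (Bcell K0 \<Omega> k)" by (rule Bcell_fin)
    show "\<forall>C\<in>Bcell K0 \<Omega> k. finite {E \<in> cells K0 (Suc k). E \<subseteq> C}" by (intro ballI fin_sub)
    show "\<forall>C1\<in>Bcell K0 \<Omega> k. \<forall>C2\<in>Bcell K0 \<Omega> k. C1 \<noteq> C2 \<longrightarrow>
        {E \<in> cells K0 (Suc k). E \<subseteq> C1} \<inter> {E \<in> cells K0 (Suc k). E \<subseteq> C2} = {}"
      unfolding Bcell_def using parent_unique[OF g] by blast
  qed
  thus ?thesis using eq unfolding nch_def by simp
qed

lemma count_mesh:
  fixes K0 :: "'n::finite \<Rightarrow> real list"
  assumes g: "good K0" and h: "hier_domains K0 \<Omega>" and M: "\<Omega> M = {}"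
  shows "int (card (mesh K0 \<Omega>)) = int (card (cells K0 0)) +
           (\<Sum>k<M. \<Sum>C \<in> Bcell K0 \<Omega> k. (int (nch K0 k C) - 1))"
proof -
  let ?a = "\<lambda>k. int (card (Acell K0 \<Omega> k))"
  let ?b = "\<lambda>k. int (card (Bcell K0 \<Omega> k))"
  have empty: "\<Omega> k = {}" if "M \<le> k" for k using hd_mono[OF h that] M by simp
  have meq: "mesh K0 \<Omega> = (\<Union>k \<in> {..<M}. Acell K0 \<Omega> k - Bcell K0 \<Omega> k)"
  proof
    show "mesh K0 \<Omega> \<subseteq> (\<Union>k \<in> {..<M}. Acell K0 \<Omega> k - Bcell K0 \<Omega> k)"
    proof
      fix T assume "T \<in> mesh K0 \<Omega>"
      then obtain k where k: "T \<in> cells K0 k" "T \<subseteq> \<Omega> k" "\<not> T \<subseteq> \<Omega> (Suc k)" unfolding mesh_def by auto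
      have "k < M"
      proof (rule ccontr)
        assume "\<not> k < M" hence "\<Omega> k = {}" using empty by simp
        thus False using k cell_nonempty[OF g k(1)] by auto
      qed
      thus "T \<in> (\<Union>k \<in> {..<M}. Acell K0 \<Omega> k - Bcell K0 \<Omega> k)" using k unfolding Acell_def Bcell_def by auto
    qed
  next
    show "(\<Union>k \<in> {..<M}. Acell K0 \<Omega> k - Bcell K0 \<Omega> k) \<subseteq> mesh K0 \<Omega>"
      unfolding Acell_def Bcell_def mesh_def by auto
  qed
  have "card (mesh K0 \<Omega>) = (\<Sum>k<M. card (Acell K0 \<Omega> k - Bcell K0 \<Omega> k))"
    unfolding meq
  proof (rule card_UN_disjoint)
    show "finite {..<M}" by simp
    show "\<forall>k\<in>{..<M}. finite (Acell K0 \<Omega> k - Bcell K0 \<Omega> k)" using Acell_fin by blast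
    show "\<forall>k\<in>{..<M}. \<forall>l\<in>{..<M}. k \<noteq> l \<longrightarrow>
        (Acell K0 \<Omega> k - Bcell K0 \<Omega> k) \<inter> (Acell K0 \<Omega> l - Bcell K0 \<Omega> l) = {}"
      unfolding Acell_def using level_unique[OF g] by blast
  qed
  hence c1: "int (card (mesh K0 \<Omega>)) = (\<Sum>k<M. ?a k - ?b k)"
  proof -
    assume eq: "card (mesh K0 \<Omega>) = (\<Sum>k<M. card (Acell K0 \<Omega> k - Bcell K0 \<Omega> k))"
    have "\<And>k. int (card (Acell K0 \<Omega> k - Bcell K0 \<Omega> k)) = ?a k - ?b k"
    proof -
      fix k
      have "Bcell K0 \<Omega> k \<subseteq> Acell K0 \<Omega> k" unfolding Acell_def Bcell_def using hdsuc[OF h] by blast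
      thus "int (card (Acell K0 \<Omega> k - Bcell K0 \<Omega> k)) = ?a k - ?b k"
      proof -
        assume sub: "Bcell K0 \<Omega> k \<subseteq> Acell K0 \<Omega> k"
        have "card (Acell K0 \<Omega> k - Bcell K0 \<Omega> k) = card (Acell K0 \<Omega> k) - card (Bcell K0 \<Omega> k)"
          by (rule card_Diff_subset[OF Bcell_fin sub])
        moreover have "card (Bcell K0 \<Omega> k) \<le> card (Acell K0 \<Omega> k)" by (rule card_mono[OF Acell_fin sub])
        ultimately show ?thesis by simp
      qed
    qed
    thus ?thesis using eq by simp
  qed
  have aM: "?a M = 0" unfolding Acell_def using M cell_nonempty[OF g] by auto
  have a0: "?a 0 = int (card (cells K0 0))"
  proof -
    have "Acell K0 \<Omega> 0 = cells K0 0" unfolding Acell_def using cells_01[OF g] hd0[OF h] by auto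
    thus ?thesis by simp
  qed
  have tel: "(\<Sum>k<M. ?a k) + ?a M = ?a 0 + (\<Sum>k<M. ?a (Suc k))"
    using sum.lessThan_Suc[of ?a M] sum.lessThan_Suc_shift[of ?a M] by simp
  have aS: "?a (Suc k) = (\<Sum>C \<in> Bcell K0 \<Omega> k. int (nch K0 k C))" for k
    using A_Suc[OF g h, of k] by simp
  have bs: "(\<Sum>C \<in> Bcell K0 \<Omega> k. (int (nch K0 k C) - 1)) = (\<Sum>C \<in> Bcell K0 \<Omega> k. int (nch K0 k C)) - ?b k" for k
    by (simp add: sum_subtractf)
  have "(\<Sum>k<M. ?a k - ?b k) = (\<Sum>k<M. ?a k) - (\<Sum>k<M. ?b k)" by (simp add: sum_subtractf)
  also have "\<dots> = ?a 0 + (\<Sum>k<M. ?a (Suc k)) - (\<Sum>k<M. ?b k)" using tel aM by simp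
  also have "\<dots> = ?a 0 + (\<Sum>k<M. (\<Sum>C \<in> Bcell K0 \<Omega> k. (int (nch K0 k C) - 1)))"
    unfolding bs aS by (simp add: sum_subtractf)
  finally show ?thesis using c1 a0 by simp
qed



lemma sub_dom_Suc:
  fixes K0 :: "'n::finite \<Rightarrow> real list"
  assumes g: "good K0" and h: "hier_domains K0 \<Omega>" and v: "validx K0 k m" and c: "ctr K0 k m \<in> \<Omega> (Suc k)"
  shows "cell K0 k m \<subseteq> \<Omega> (Suc k)"
proof -
  obtain S where S: "S \<subseteq> cells K0 k" "\<Omega> (Suc k) = \<Union>S" using hdS[OF h] by blast
  obtain E where E: "E \<in> S" "ctr K0 k m \<in> E" using c S by auto
  obtain r where r: "validx K0 k r" "E = cell K0 k r" using E S unfolding cells_alt by auto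
  have "cell K0 k m \<subseteq> cell K0 k r"
    apply (rule cell_sub_cell[OF g order_refl v r(1), of "ctr K0 k m"])
    using ctr_strict[OF g v] E r by auto
  thus ?thesis using E S r by auto
qed

lemma B_union:
  fixes K0 :: "'n::finite \<Rightarrow> real list"
  assumes g: "good K0" and hb: "hier_domains K0 \<Omega>b" and hs: "hier_domains K0 \<Omega>s"
  shows "Bcell K0 (\<lambda>k. \<Omega>b k \<union> \<Omega>s k) k = Bcell K0 \<Omega>b k \<union> Bcell K0 \<Omega>s k"
proof
  show "Bcell K0 (\<lambda>k. \<Omega>b k \<union> \<Omega>s k) k \<subseteq> Bcell K0 \<Omega>b k \<union> Bcell K0 \<Omega>s k"
  proof
    fix C assume "C \<in> Bcell K0 (\<lambda>k. \<Omega>b k \<union> \<Omega>s k) k"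
    hence C: "C \<in> cells K0 k" "C \<subseteq> \<Omega>b (Suc k) \<union> \<Omega>s (Suc k)" unfolding Bcell_def by auto
    obtain m where m: "validx K0 k m" "C = cell K0 k m" using C(1) unfolding cells_alt by auto
    have "ctr K0 k m \<in> \<Omega>b (Suc k) \<union> \<Omega>s (Suc k)" using ctr_in[OF g m(1)] m(2) C(2) by auto
    hence "C \<subseteq> \<Omega>b (Suc k) \<or> C \<subseteq> \<Omega>s (Suc k)"
      using sub_dom_Suc[OF g hb m(1)] sub_dom_Suc[OF g hs m(1)] m(2) by auto
    thus "C \<in> Bcell K0 \<Omega>b k \<union> Bcell K0 \<Omega>s k" using C(1) unfolding Bcell_def by auto
  qed
next
  show "Bcell K0 \<Omega>b k \<union> Bcell K0 \<Omega>s k \<subseteq> Bcell K0 (\<lambda>k. \<Omega>b k \<union> \<Omega>s k) k"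
    unfolding Bcell_def by auto
qed

lemma count_ineq:
  fixes K0 :: "'n::finite \<Rightarrow> real list"
  assumes g: "good K0" and hb: "hier_domains K0 \<Omega>b" and hs: "hier_domains K0 \<Omega>s"
  shows "int (card (mesh K0 (\<lambda>k. \<Omega>b k \<union> \<Omega>s k)))
        \<le> int (card (mesh K0 \<Omega>b)) + int (card (mesh K0 \<Omega>s)) - int (card (cells K0 0))"
proof -
  obtain N1 where N1: "\<Omega>b N1 = {}" using hdN[OF hb] by blast
  obtain N2 where N2: "\<Omega>s N2 = {}" using hdN[OF hs] by blast
  define M where "M = max N1 N2"
  have Mb: "\<Omega>b M = {}" using hd_mono[OF hb, of N1 M] N1 M_def by simp
  have Ms: "\<Omega>s M = {}" using hd_mono[OF hs, of N2 M] N2 M_def by simp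
  have hc: "hier_domains K0 (\<lambda>k. \<Omega>b k \<union> \<Omega>s k)" by (rule hier_union[OF hb hs])
  define f where "f = (\<lambda>k C. int (nch K0 k C) - 1)"
  have fnn: "0 \<le> f k C" if "C \<in> cells K0 k" for k C using nch_pos[OF g that] f_def by simp
  have "(\<Sum>C \<in> Bcell K0 (\<lambda>k. \<Omega>b k \<union> \<Omega>s k) k. f k C) \<le>
        (\<Sum>C \<in> Bcell K0 \<Omega>b k. f k C) + (\<Sum>C \<in> Bcell K0 \<Omega>s k. f k C)" for k
  proof -
    have "(\<Sum>C \<in> Bcell K0 \<Omega>b k \<union> Bcell K0 \<Omega>s k. f k C) + (\<Sum>C \<in> Bcell K0 \<Omega>b k \<inter> Bcell K0 \<Omega>s k. f k C)
        = (\<Sum>C \<in> Bcell K0 \<Omega>b k. f k C) + (\<Sum>C \<in> Bcell K0 \<Omega>s k. f k C)"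
      by (rule sum.union_inter[OF Bcell_fin Bcell_fin])
    moreover have "0 \<le> (\<Sum>C \<in> Bcell K0 \<Omega>b k \<inter> Bcell K0 \<Omega>s k. f k C)"
      by (rule sum_nonneg) (auto simp: Bcell_def intro: fnn)
    ultimately show ?thesis unfolding B_union[OF g hb hs] by linarith
  qed
  hence "(\<Sum>k<M. \<Sum>C \<in> Bcell K0 (\<lambda>k. \<Omega>b k \<union> \<Omega>s k) k. f k C) \<le>
        (\<Sum>k<M. \<Sum>C \<in> Bcell K0 \<Omega>b k. f k C) + (\<Sum>k<M. \<Sum>C \<in> Bcell K0 \<Omega>s k. f k C)"
    by (simp add: sum.distrib[symmetric] sum_mono)
  moreover have "int (card (mesh K0 (\<lambda>k. \<Omega>b k \<union> \<Omega>s k))) = int (card (cells K0 0)) +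
       (\<Sum>k<M. \<Sum>C \<in> Bcell K0 (\<lambda>k. \<Omega>b k \<union> \<Omega>s k) k. f k C)"
    unfolding f_def by (rule count_mesh[OF g hc]) (simp add: Mb Ms)
  moreover have "int (card (mesh K0 \<Omega>b)) = int (card (cells K0 0)) + (\<Sum>k<M. \<Sum>C \<in> Bcell K0 \<Omega>b k. f k C)"
    unfolding f_def by (rule count_mesh[OF g hb Mb])
  moreover have "int (card (mesh K0 \<Omega>s)) = int (card (cells K0 0)) + (\<Sum>k<M. \<Sum>C \<in> Bcell K0 \<Omega>s k. f k C)"
    unfolding f_def by (rule count_mesh[OF g hs Ms])
  ultimately show ?thesis by linarith
qed

theorem mainTheorem10:
  fixes p :: "'n::finite \<Rightarrow> nat" and K0 :: "'n \<Rightarrow> real list"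
    and \<Omega>b \<Omega>s :: "nat \<Rightarrow> (real^'n) set"
  assumes "CARD('n) \<ge> 2"
    and "\<forall>i. p i \<ge> 1"
    and "\<forall>i. open_knot_vector (p i) (K0 i)"
    and "hier_domains K0 \<Omega>b" and "admissible p K0 \<Omega>b"
    and "hier_domains K0 \<Omega>s" and "admissible p K0 \<Omega>s"
  shows "hier_domains K0 (\<lambda>k. \<Omega>b k \<union> \<Omega>s k)
    \<and> admissible p K0 (\<lambda>k. \<Omega>b k \<union> \<Omega>s k)
    \<and> finer (\<lambda>k. \<Omega>b k \<union> \<Omega>s k) \<Omega>b
    \<and> finer (\<lambda>k. \<Omega>b k \<union> \<Omega>s k) \<Omega>s
    \<and> int (card (mesh K0 (\<lambda>k. \<Omega>b k \<union> \<Omega>s k)))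
        \<le> int (card (mesh K0 \<Omega>b)) + int (card (mesh K0 \<Omega>s)) - int (card (cells K0 0))"
proof -
  have g: "good K0" using good_K0[OF assms(3)] .
  have hc: "hier_domains K0 (\<lambda>k. \<Omega>b k \<union> \<Omega>s k)" by (rule hier_union[OF assms(4,6)])
  have "Qp p K0 (\<lambda>k. \<Omega>b k \<union> \<Omega>s k)"
    by (rule Q_union[OF g assms(4,6) adm_Q[OF assms(3,4,5)] adm_Q[OF assms(3,6,7)]])
  hence adm: "admissible p K0 (\<lambda>k. \<Omega>b k \<union> \<Omega>s k)" by (rule Q_adm[OF g hc])
  have "finer (\<lambda>k. \<Omega>b k \<union> \<Omega>s k) \<Omega>b" "finer (\<lambda>k. \<Omega>b k \<union> \<Omega>s k) \<Omega>s"
    unfolding finer_def by auto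
  thus ?thesis using hc adm count_ineq[OF g assms(4,6)] by simp
qed


end
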